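(* Let $k>1$ be an integer and let $q\in(0,1)$ be a fixed constant. Then there exists $c>0$ such that for a random fan $\Sigma$ chosen with respect to $T(h,1-q)$, with high probability $\delta_k(\Sigma)>c$.
   Context: A ray is a half-line $\rho=\mathbb{R}_{\ge 0}v\subset\mathbb{R}^2$ with $v\in\mathbb{Z}^2\setminus\{0\}$; $u_\rho$ is its primitive lattice generator. On $\mathbb{Z}^2$ use the norm $|(x,y)|=\max\{|x|,|y|\}$, and $|\rho|=|u_\rho|$. The completion of a finite set $S$ of rays is the fan with ray set $S$ that is maximal under inclusion among fans with ray set $S$ (its $2$-dimensional cones are spanned by angularly consecutive rays of $S$ at angle less than $\pi$). $T(h,p)$ is the distribution on fans obtained by including each ray $\rho$ with $|\rho|\le h$ independently with probability $p$ and completing. The singularity index of a $2$-dimensional cone spanned by $\rho,\tau$ is $|\det(u_\rho,u_\tau)|$. The $2$-dimensional cones of $\Sigma$ correspond to the torus-fixed points of $X(\Sigma)$. Define $\delta_k(\Sigma)$ as the number of $2$-dimensional cones of $\Sigma$ of singularity index at least $k$ divided by the total number of $2$-dimensional cones of $\Sigma$. "With high probability" means with probability tending to $1$ as $h\to\infty$. *)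

theory Defs
  imports "HOL-Probability.Probability"
begin

text \<open>Lattice vectors in Z^2 are pairs of integers.  A ray is represented by its
primitive lattice generator.\<close>

definition det2 :: "int \<times> int \<Rightarrow> int \<times> int \<Rightarrow> int" where
  "det2 u v = fst u * snd v - snd u * fst v"

definition maxnorm :: "int \<times> int \<Rightarrow> int" where
  "maxnorm u = max \<bar>fst u\<bar> \<bar>snd u\<bar>"

definition primitive :: "int \<times> int \<Rightarrow> bool" where
  "primitive u \<longleftrightarrow> u \<noteq> (0, 0) \<and> gcd (fst u) (snd u) = 1"

definition rays_upto :: "nat \<Rightarrow> (int \<times> int) set" where
  "rays_upto h = {u. primitive u \<and> maxnorm u \<le> int h}"

text \<open>Two-dimensional cones of the completion of a finite set S of rays:
  a cone spanned by rays u, v of S that are angularly consecutive (counterclockwise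
  from u to v, no ray of S strictly between them) at angle less than pi
  (i.e. det(u,v) > 0).  A ray w lies strictly between u and v (inside the open
  cone spanned by u and v, when det(u,v) > 0) iff det(u,w) > 0 and det(w,v) > 0.
  Each such cone is recorded as the ordered pair (u, v).\<close>
definition completion_cones :: "(int \<times> int) set \<Rightarrow> ((int \<times> int) \<times> (int \<times> int)) set" where
  "completion_cones S =
     {(u, v). u \<in> S \<and> v \<in> S \<and> det2 u v > 0 \<and>
              \<not> (\<exists>w\<in>S. det2 u w > 0 \<and> det2 w v > 0)}"

definition sing_index :: "int \<times> int \<Rightarrow> int \<times> int \<Rightarrow> int" where
  "sing_index u v = \<bar>det2 u v\<bar>"

text \<open>delta_k of the completion of S (Isabelle convention: 0 if there are no 2-cones).\<close>
definition delta :: "nat \<Rightarrow> (int \<times> int) set \<Rightarrow> real" where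
  "delta k S =
     real (card {(u, v) \<in> completion_cones S. sing_index u v \<ge> int k})
     / real (card (completion_cones S))"

text \<open>T(h,p): each ray of norm <= h is included independently with probability p;
  the random fan is the completion of the chosen ray set {u. f u}.\<close>
definition ray_choice :: "nat \<Rightarrow> real \<Rightarrow> ((int \<times> int) \<Rightarrow> bool) pmf" where
  "ray_choice h p = Pi_pmf (rays_upto h) False (\<lambda>_. bernoulli_pmf p)"

end

theory Submission
  imports Defs
begin


lemma cramer: "det2 x y * det2 u t = det2 t y * det2 u x + det2 x t * det2 u y"
  by (simp add: det2_def algebra_simps)
lemma pluck: "det2 u w * det2 x t = det2 x w * det2 u t - det2 u x * det2 t w"
  by (simp add: det2_def algebra_simps)
lemma det_xy: "det2 u w = 1 \<Longrightarrow> det2 w v = 1 \<Longrightarrow> det2 x y = det2 x w * det2 y v + det2 x w * det2 w y * det2 u v + det2 u x * det2 w y"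
  unfolding det2_def by algebra
lemma det_swap: "det2 x y = - det2 y x" by (simp add: det2_def)
lemma det_self[simp]: "det2 x x = 0" by (simp add: det2_def)

lemma det_zero_multiple:
  assumes "primitive u" "det2 u t = 0"
  shows "\<exists>j. t = (j * fst u, j * snd u)"
proof -
  obtain p r where pr: "p * fst u + r * snd u = gcd (fst u) (snd u)" using bezout_int by blast
  hence pr1: "p * fst u + r * snd u = 1" using assms(1) by (simp add: primitive_def)
  have d: "fst u * snd t = snd u * fst t" using assms(2) by (simp add: det2_def)
  define j where "j = p * fst t + r * snd t"
  have "fst t = j * fst u"
  proof -
    have "fst t = fst t * (p * fst u + r * snd u)" using pr1 by simp
    also have "\<dots> = j * fst u" unfolding j_def using d by (simp add: algebra_simps)
    finally show ?thesis .
  qed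
  moreover have "snd t = j * snd u"
  proof -
    have "snd t = snd t * (p * fst u + r * snd u)" using pr1 by simp
    also have "\<dots> = j * snd u" unfolding j_def using d by (simp add: algebra_simps)
    finally show ?thesis .
  qed
  ultimately show ?thesis by (metis prod.collapse)
qed

lemma prim_mult_dvd:
  assumes "primitive t" "t = (j * a, j * b)"
  shows "j dvd 1"
proof -
  have "j dvd fst t" "j dvd snd t" using assms(2) by auto
  hence "j dvd gcd (fst t) (snd t)" by (rule gcd_greatest)
  thus ?thesis using assms(1) unfolding primitive_def by metis
qed

lemma prim_det1:
  assumes "det2 u w = 1"
  shows "primitive u" "primitive w"
proof -
  have "gcd (fst u) (snd u) dvd det2 u w" unfolding det2_def by simp
  hence "gcd (fst u) (snd u) dvd 1" using assms by simp
  hence "gcd (fst u) (snd u) = 1" by simp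
  moreover have "u \<noteq> (0,0)" using assms by (auto simp: det2_def)
  ultimately show "primitive u" by (simp add: primitive_def)
  have "gcd (fst w) (snd w) dvd det2 u w" unfolding det2_def by simp
  hence "gcd (fst w) (snd w) dvd 1" using assms by simp
  hence "gcd (fst w) (snd w) = 1" by simp
  moreover have "w \<noteq> (0,0)" using assms by (auto simp: det2_def)
  ultimately show "primitive w" by (simp add: primitive_def)
qed

lemma finite_max_real:
  fixes g :: "'a \<Rightarrow> real"
  assumes "finite A" "A \<noteq> {}"
  obtains x where "x \<in> A" "\<And>y. y \<in> A \<Longrightarrow> g y \<le> g x"
proof -
  have "Max (g ` A) \<in> g ` A" using assms by simp
  then obtain x where "x \<in> A" "g x = Max (g ` A)" by auto
  thus ?thesis using that assms by auto
qed

lemma cone_exists: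
  assumes SP: "S \<subseteq> Collect primitive" and fin: "finite S"
    and uS: "u \<in> S" and vS: "v \<in> S" and wS: "w \<notin> S" and pw: "primitive w"
    and uw: "det2 u w = 1" and wv: "det2 w v = 1" and uvK: "det2 u v \<ge> K" and K: "K > 0"
  shows "\<exists>x y. (x, y) \<in> completion_cones S \<and> det2 x y \<ge> K \<and> det2 x w > 0 \<and> det2 w y > 0
               \<and> det2 u x \<ge> 0 \<and> det2 y v \<ge> 0"
proof -
  define A where "A = {x\<in>S. det2 x w > 0 \<and> det2 u x \<ge> 0}"
  define B where "B = {y\<in>S. det2 w y > 0 \<and> det2 y v \<ge> 0}"
  have uA: "u \<in> A" using uS uw by (simp add: A_def)
  have vB: "v \<in> B" using vS wv by (simp add: B_def)
  obtain x where xA: "x \<in> A" and xmax: "\<And>t. t \<in> A \<Longrightarrow>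
      real_of_int (det2 u t) / real_of_int (det2 t w) \<le> real_of_int (det2 u x) / real_of_int (det2 x w)"
  proof -
    have "finite A" using fin by (simp add: A_def)
    thus ?thesis using finite_max_real[of A "\<lambda>t. real_of_int (det2 u t) / real_of_int (det2 t w)"] uA that by blast
  qed
  obtain y where yB: "y \<in> B" and ymax: "\<And>t. t \<in> B \<Longrightarrow>
      real_of_int (det2 t v) / real_of_int (det2 w t) \<le> real_of_int (det2 y v) / real_of_int (det2 w y)"
  proof -
    have "finite B" using fin by (simp add: B_def)
    thus ?thesis using finite_max_real[of B "\<lambda>t. real_of_int (det2 t v) / real_of_int (det2 w t)"] vB that by blast
  qed
  define al where "al = det2 x w"
  define be where "be = det2 u x"
  define ga where "ga = det2 y v"
  define de where "de = det2 w y"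
  have al: "al > 0" and be: "be \<ge> 0" and xS: "x \<in> S" using xA by (auto simp: A_def al_def be_def)
  have de: "de > 0" and ga: "ga \<ge> 0" and yS: "y \<in> S" using yB by (auto simp: B_def de_def ga_def)
  have dxy: "det2 x y = al * ga + al * de * det2 u v + be * de"
    unfolding al_def be_def ga_def de_def by (rule det_xy[OF uw wv])
  have "al * de * det2 u v \<ge> det2 u v"
  proof -
    have "al * de \<ge> 1" using al de by (simp add: int_one_le_iff_zero_less)
    hence "(al * de - 1) * det2 u v \<ge> 0" using K uvK by (intro mult_nonneg_nonneg) linarith+
    thus ?thesis by (simp add: left_diff_distrib)
  qed
  moreover have "al * ga \<ge> 0" "be * de \<ge> 0" using al ga be de by auto
  ultimately have xyK: "det2 x y \<ge> K" using dxy uvK by linarith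
  have nobetween: "\<not> (\<exists>t\<in>S. det2 x t > 0 \<and> det2 t y > 0)"
  proof
    assume "\<exists>t\<in>S. det2 x t > 0 \<and> det2 t y > 0"
    then obtain t where tS: "t \<in> S" and xt: "det2 x t > 0" and ty: "det2 t y > 0" by blast
    consider "det2 t w > 0" | "det2 t w = 0" | "det2 t w < 0" by linarith
    thus False
    proof cases
      case 1
      have e: "det2 x t = al * det2 u t - be * det2 t w"
        using pluck[of u w x t] uw by (simp add: al_def be_def)
      have "be * det2 t w \<ge> 0" using be 1 by simp
      hence "al * det2 u t > 0" using e xt by linarith
      hence ut: "det2 u t > 0" using al by (simp add: zero_less_mult_iff)
      hence "t \<in> A" using tS 1 by (simp add: A_def)
      hence le: "real_of_int (det2 u t) / real_of_int (det2 t w) \<le> real_of_int be / real_of_int al"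
        using xmax by (simp add: al_def be_def)
      have "be * det2 t w < det2 u t * al"
        using e xt by (simp add: algebra_simps)
      hence "real_of_int (be * det2 t w) < real_of_int (det2 u t * al)" by (simp only: of_int_less_iff)
      hence "real_of_int be * real_of_int (det2 t w) < real_of_int (det2 u t) * real_of_int al" by simp
      thus False using le 1 al by (simp add: divide_simps)
    next
      case 2
      have "det2 w t = 0" using 2 det_swap[of w t] by simp
      then obtain j where tj: "t = (j * fst w, j * snd w)" using det_zero_multiple[OF pw] by blast
      have "primitive t" using SP tS by auto
      hence "j dvd 1" using prim_mult_dvd tj by blast
      moreover have "det2 x t = j * al" using tj by (simp add: al_def det2_def algebra_simps)
      moreover have "j > 0" using xt al \<open>det2 x t = j * al\<close> by (simp add: zero_less_mult_iff)
      ultimately have "j = 1" by (simp add: zdvd1_eq)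
      hence "t = w" using tj by simp
      thus False using tS wS by simp
    next
      case 3
      have wt: "det2 w t > 0" using 3 det_swap[of w t] by simp
      have e: "det2 t y = det2 t v * de - det2 w t * ga"
        using pluck[of w v t y] wv by (simp add: de_def ga_def)
      have "det2 w t * ga \<ge> 0" using ga wt by simp
      hence "det2 t v * de > 0" using e ty by linarith
      hence tv: "det2 t v > 0" using de by (simp add: zero_less_mult_iff)
      hence "t \<in> B" using tS wt by (simp add: B_def)
      hence le: "real_of_int (det2 t v) / real_of_int (det2 w t) \<le> real_of_int ga / real_of_int de"
        using ymax by (simp add: de_def ga_def)
      have "ga * det2 w t < det2 t v * de"
        using e ty by (simp add: algebra_simps)
      hence "real_of_int (ga * det2 w t) < real_of_int (det2 t v * de)" by (simp only: of_int_less_iff)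
      hence "real_of_int ga * real_of_int (det2 w t) < real_of_int (det2 t v) * real_of_int de" by simp
      thus False using le wt de by (simp add: divide_simps)
    qed
  qed
  have "(x, y) \<in> completion_cones S"
    unfolding completion_cones_def using xS yS xyK K nobetween by auto
  moreover have "det2 x w > 0" "det2 w y > 0" "det2 u x \<ge> 0" "det2 y v \<ge> 0"
    using al de be ga by (simp_all add: al_def de_def be_def ga_def)
  ultimately show ?thesis using xyK by blast
qed



definition sF :: "int \<times> int \<Rightarrow> int" where "sF x = fst x + snd x"
definition Wset :: "int \<Rightarrow> (int \<times> int) set" where
  "Wset N = {w. 1 \<le> fst w \<and> fst w \<le> N \<and> 1 \<le> snd w \<and> snd w \<le> N \<and> coprime (fst w) (snd w)}"
definition zW :: "int \<times> int \<Rightarrow> int \<times> int" where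
  "zW w = (SOME z. fst w * snd z - snd w * fst z = 1 \<and> 0 \<le> fst z \<and> fst z < fst w)"
definition mW :: "int \<Rightarrow> int \<times> int \<Rightarrow> int" where "mW L w = L div sF w"
definition uW :: "int \<Rightarrow> int \<times> int \<Rightarrow> int \<times> int" where
  "uW L w = (mW L w * fst w - fst (zW w), mW L w * snd w - snd (zW w))"
definition vW :: "int \<Rightarrow> int \<times> int \<Rightarrow> int \<times> int" where
  "vW L w = (mW L w * fst w + fst (zW w), mW L w * snd w + snd (zW w))"

lemma zW_ex:
  fixes a b :: int
  assumes "a \<ge> 1" "coprime a b"
  shows "\<exists>z. a * snd z - b * fst z = 1 \<and> 0 \<le> fst z \<and> fst z < a"
proof -
  obtain x y where xy: "x * a + y * b = gcd a b" using bezout_int by blast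
  hence xy1: "x * a + y * b = 1" using assms(2) by simp
  define c0 where "c0 = - y"
  define t where "t = c0 div a"
  define c where "c = c0 mod a"
  define d where "d = x - b * t"
  have c0: "c0 = c + a * t" unfolding c_def t_def by simp
  have "a * d - b * c = 1" unfolding d_def using xy1 c0 unfolding c0_def by algebra
  moreover have "0 \<le> c" "c < a" using assms(1) by (simp_all add: c_def)
  ultimately show ?thesis by (intro exI[of _ "(c, d)"]) simp
qed

lemma zW_prop:
  assumes "w \<in> Wset N"
  shows "fst w * snd (zW w) - snd w * fst (zW w) = 1" "0 \<le> fst (zW w)" "fst (zW w) < fst w"
    "1 \<le> snd (zW w)" "snd (zW w) \<le> snd w"
proof -
  have a: "fst w \<ge> 1" "snd w \<ge> 1" "coprime (fst w) (snd w)" using assms by (auto simp: Wset_def)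
  have "\<exists>z. fst w * snd z - snd w * fst z = 1 \<and> 0 \<le> fst z \<and> fst z < fst w"
    by (rule zW_ex) (use a in auto)
  hence P: "fst w * snd (zW w) - snd w * fst (zW w) = 1 \<and> 0 \<le> fst (zW w) \<and> fst (zW w) < fst w"
    unfolding zW_def by (rule someI_ex)
  thus e: "fst w * snd (zW w) - snd w * fst (zW w) = 1" "0 \<le> fst (zW w)" "fst (zW w) < fst w" by auto
  define a' where "a' = fst w"
  define b where "b = snd w"
  define c where "c = fst (zW w)"
  define d where "d = snd (zW w)"
  have ad: "a' * d = 1 + b * c" using e by (simp add: a'_def b_def c_def d_def)
  have "b * c \<ge> 0" using a e by (simp add: b_def c_def)
  hence "a' * d \<ge> 1" using ad by simp
  moreover have "a' \<ge> 1" using a by (simp add: a'_def)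
  ultimately have "d \<ge> 1"
  proof -
    assume h: "a' * d \<ge> 1" "a' \<ge> 1"
    show "d \<ge> 1"
    proof (rule ccontr)
      assume "\<not> d \<ge> 1"
      hence "d \<le> 0" by simp
      hence "a' * d \<le> 0" using h(2) by (intro mult_nonneg_nonpos) simp_all
      thus False using h(1) by simp
    qed
  qed
  thus "1 \<le> snd (zW w)" by (simp add: d_def)
  have "b * c \<le> b * (a' - 1)" using a e by (intro mult_left_mono) (simp_all add: b_def c_def a'_def)
  hence "a' * d \<le> a' * b" using ad a by (simp add: algebra_simps b_def)
  moreover have "a' > 0" using a by (simp add: a'_def)
  ultimately have "d \<le> b" by simp
  thus "snd (zW w) \<le> snd w" by (simp add: d_def b_def)
qed

lemma fam_basic:
  assumes w: "w \<in> Wset N" and L: "L \<ge> 0"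
  shows "det2 (uW L w) w = 1" "det2 w (vW L w) = 1" "det2 (uW L w) (vW L w) = 2 * mW L w"
    "2 \<le> sF w" "sF w \<le> 2 * N"
    "sF (uW L w) > L - 2 * sF w" "sF (vW L w) > L - sF w"
    "L div (2 * N) \<le> mW L w"
    "maxnorm (uW L w) \<le> L + N" "maxnorm (vW L w) \<le> L + N"
proof -
  note z = zW_prop[OF w]
  define a where "a = fst w"
  define b where "b = snd w"
  define c where "c = fst (zW w)"
  define d where "d = snd (zW w)"
  define m where "m = mW L w"
  have ab: "1 \<le> a" "a \<le> N" "1 \<le> b" "b \<le> N" using w by (auto simp: Wset_def a_def b_def)
  have cd: "a * d - b * c = 1" "0 \<le> c" "c < a" "1 \<le> d" "d \<le> b"
    using z by (simp_all add: a_def b_def c_def d_def)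
  have wab: "w = (a, b)" by (simp add: a_def b_def)
  have u: "uW L w = (m * a - c, m * b - d)" by (simp add: uW_def a_def b_def c_def d_def m_def)
  have v: "vW L w = (m * a + c, m * b + d)" by (simp add: vW_def a_def b_def c_def d_def m_def)
  have "det2 (m * a - c, m * b - d) (a, b) = 1" unfolding det2_def using cd(1) by (simp add: algebra_simps)
  thus "det2 (uW L w) w = 1" by (simp only: u[symmetric] wab[symmetric])
  have "det2 (a, b) (m * a + c, m * b + d) = 1" unfolding det2_def using cd(1) by (simp add: algebra_simps)
  thus "det2 w (vW L w) = 1" by (simp only: v[symmetric] wab[symmetric])
  have "det2 (uW L w) (vW L w) = 2 * m * (a * d - b * c)" unfolding u v det2_def by (simp add: algebra_simps)
  thus "det2 (uW L w) (vW L w) = 2 * m" using cd(1) by simp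
  have s: "sF w = a + b" by (simp add: sF_def a_def b_def)
  show "2 \<le> sF w" "sF w \<le> 2 * N" using s ab by simp_all
  have spos: "sF w > 0" using s ab by simp
  have mdef: "m = L div (a + b)" by (simp add: m_def mW_def s)
  have abp: "a + b > 0" using ab by simp
  have m0: "m \<ge> 0" using mdef L abp by (simp add: pos_imp_zdiv_nonneg_iff)
  have msL: "m * (a + b) \<le> L"
  proof -
    have "L = m * (a + b) + L mod (a + b)" using mdef by (simp add: div_mult_mod_eq)
    moreover have "L mod (a + b) \<ge> 0" using abp by simp
    ultimately show ?thesis by linarith
  qed
  have msL2: "m * (a + b) > L - (a + b)"
  proof -
    have "L = m * (a + b) + L mod (a + b)" using mdef by (simp add: div_mult_mod_eq)
    moreover have "L mod (a + b) < a + b" using ab by simp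
    ultimately show ?thesis by linarith
  qed
  show "sF (uW L w) > L - 2 * sF w" using msL2 cd ab unfolding u s unfolding sF_def by (simp add: algebra_simps)
  show "sF (vW L w) > L - sF w" using msL2 cd ab unfolding v s unfolding sF_def by (simp add: algebra_simps)
  show "L div (2 * N) \<le> m" unfolding mdef using L ab by (intro zdiv_mono2) simp_all
  have ma: "m * a \<le> L" "m * b \<le> L" "m * a \<ge> 0" "m * b \<ge> 0"
    using msL m0 ab by (simp_all add: algebra_simps) (smt (verit) mult_nonneg_nonneg)+
  show "maxnorm (uW L w) \<le> L + N" unfolding u maxnorm_def using ma cd ab L by (auto simp: abs_le_iff)
  show "maxnorm (vW L w) \<le> L + N" unfolding v maxnorm_def using ma cd ab L by (auto simp: abs_le_iff)
qed

lemma zero_by_size: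
  assumes "t = (j * fst u, j * snd u)" "sF u > 0" "\<bar>sF t\<bar> < sF u"
  shows "j = 0"
proof (rule ccontr)
  assume "j \<noteq> 0"
  hence "\<bar>j\<bar> \<ge> 1" by simp
  have "sF t = j * sF u" using assms(1) by (simp add: sF_def algebra_simps)
  hence "\<bar>sF t\<bar> = \<bar>j\<bar> * sF u" using assms(2) by (simp add: abs_mult)
  also have "\<dots> \<ge> 1 * sF u" using \<open>\<bar>j\<bar> \<ge> 1\<close> assms(2) by (intro mult_right_mono) simp_all
  finally show False using assms(3) by simp
qed

lemma sF_comb:
  "det2 p q = 1 \<Longrightarrow> sF t = det2 t q * sF p + det2 p t * sF q"
  unfolding sF_def det2_def by algebra

lemma fam_dist:
  assumes w: "w \<in> Wset N" and w': "w' \<in> Wset N" and L: "L \<ge> 8 * N" and N: "N \<ge> 1"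
  shows "uW L w \<noteq> w'" "vW L w \<noteq> w'" "uW L w \<noteq> vW L w"
    "w \<noteq> w' \<Longrightarrow> uW L w \<noteq> uW L w'"
    "w \<noteq> w' \<Longrightarrow> vW L w \<noteq> vW L w'"
    "w \<noteq> w' \<Longrightarrow> uW L w \<noteq> vW L w'"
    "w \<noteq> w' \<Longrightarrow> \<not> (det2 (uW L w) w' > 0 \<and> det2 w' (vW L w) > 0)"
proof -
  have L0: "L \<ge> 0" using L N by simp
  note F = fam_basic[OF w L0] and F' = fam_basic[OF w' L0]
  define U where "U = uW L w"
  define V where "V = vW L w"
  have sU: "sF U > 4 * N" using F(5,6) L unfolding U_def by linarith
  have sV: "sF V > 6 * N" using F(5,7) L unfolding V_def by linarith
  have sw': "sF w' \<le> 2 * N" "sF w' \<ge> 2" using F'(4,5) by simp_all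
  have sw: "sF w \<le> 2 * N" "sF w \<ge> 2" using F(4,5) by simp_all
  show "uW L w \<noteq> w'" using sU sw' unfolding U_def by auto
  show "vW L w \<noteq> w'" using sV sw' unfolding V_def by auto
  have "L div (2 * N) \<ge> 8 * N div (2 * N)" using L N by (intro zdiv_mono1) simp_all
  moreover have "8 * N div (2 * N) = 4"
  proof -
    have "8 * N = 4 * (2 * N)" by simp
    thus ?thesis using N by simp
  qed
  ultimately have m4: "mW L w \<ge> 4" using F(8) by linarith
  show "uW L w \<noteq> vW L w"
  proof
    assume "uW L w = vW L w"
    hence "det2 (uW L w) (vW L w) = 0" by simp
    thus False using F(3) m4 by simp
  qed
  have Uw: "det2 U w = 1" and wV: "det2 w V = 1" using F unfolding U_def V_def by simp_all
  have pU: "primitive U" "primitive w" using prim_det1[OF Uw] by simp_all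
  have pV: "primitive V" using prim_det1[OF wV] by simp
  have pw': "primitive w'" using prim_det1[OF F'(1)] by simp
  assume ne: "w \<noteq> w'"
  show "uW L w \<noteq> uW L w'"
  proof
    assume eq: "uW L w = uW L w'"
    define t where "t = (fst w - fst w', snd w - snd w')"
    have "det2 U t = det2 U w - det2 U w'" by (simp add: t_def det2_def algebra_simps)
    also have "\<dots> = 0" using Uw F'(1) eq unfolding U_def by simp
    finally obtain j where tj: "t = (j * fst U, j * snd U)" using det_zero_multiple[OF pU(1)] by blast
    have "\<bar>sF t\<bar> < sF U" using sU sw sw' by (simp add: t_def sF_def)
    hence "j = 0" using zero_by_size[OF tj] sU N by simp
    hence "t = (0, 0)" using tj by simp
    thus False using ne by (simp add: t_def prod_eq_iff)
  qed
  show "vW L w \<noteq> vW L w'"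
  proof
    assume eq: "vW L w = vW L w'"
    define t where "t = (fst w - fst w', snd w - snd w')"
    have "det2 V t = det2 w' V - det2 w V" by (simp add: t_def det2_def algebra_simps)
    also have "\<dots> = 0" using wV F'(2) eq unfolding V_def by simp
    finally obtain j where tj: "t = (j * fst V, j * snd V)" using det_zero_multiple[OF pV] by blast
    have "\<bar>sF t\<bar> < sF V" using sV sw sw' by (simp add: t_def sF_def)
    hence "j = 0" using zero_by_size[OF tj] sV N by simp
    hence "t = (0, 0)" using tj by simp
    thus False using ne by (simp add: t_def prod_eq_iff)
  qed
  show "uW L w \<noteq> vW L w'"
  proof
    assume eq: "uW L w = vW L w'"
    define t where "t = (fst w + fst w', snd w + snd w')"
    have "det2 U t = det2 U w - det2 w' U" by (simp add: t_def det2_def algebra_simps)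
    also have "\<dots> = 0" using Uw F'(2) eq unfolding U_def by simp
    finally obtain j where tj: "t = (j * fst U, j * snd U)" using det_zero_multiple[OF pU(1)] by blast
    have "\<bar>sF t\<bar> < sF U" using sU sw sw' by (simp add: t_def sF_def)
    hence "j = 0" using zero_by_size[OF tj] sU N by simp
    hence "sF t = 0" using tj by (simp add: sF_def)
    thus False using sw sw' by (simp add: t_def sF_def)
  qed
  show "\<not> (det2 (uW L w) w' > 0 \<and> det2 w' (vW L w) > 0)"
  proof
    assume "det2 (uW L w) w' > 0 \<and> det2 w' (vW L w) > 0"
    hence a1: "det2 U w' > 0" and a2: "det2 w' V > 0" unfolding U_def V_def by auto
    consider "det2 w w' > 0" | "det2 w w' = 0" | "det2 w w' < 0" by linarith
    thus False
    proof cases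
      case 1
      have e: "sF w' = det2 w' V * sF w + det2 w w' * sF V" by (rule sF_comb[OF wV])
      have "det2 w' V * sF w \<ge> 0" using a2 sw by simp
      moreover have "det2 w w' * sF V \<ge> 1 * sF V" using 1 sV N by (intro mult_right_mono) simp_all
      ultimately show False using e sV sw' by linarith
    next
      case 3
      have e: "sF w' = det2 w' w * sF U + det2 U w' * sF w" by (rule sF_comb[OF Uw])
      have "det2 U w' * sF w \<ge> 0" using a1 sw by simp
      moreover have "det2 w' w * sF U \<ge> 1 * sF U" using 3 sU N det_swap[of w' w]
        by (intro mult_right_mono) simp_all
      ultimately show False using e sU sw' by linarith
    next
      case 2
      obtain j where tj: "w' = (j * fst w, j * snd w)" using det_zero_multiple[OF pU(2) 2] by blast
      have "sF w' = j * sF w" using tj by (simp add: sF_def algebra_simps)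
      hence "0 < j * sF w" using sw' by simp
      hence "j > 0" using sw by (simp add: zero_less_mult_iff)
      moreover have "j dvd 1" using prim_mult_dvd[OF pw' tj] .
      ultimately have "j = 1" by (simp add: zdvd1_eq)
      thus False using tj ne by simp
    qed
  qed
qed



lemma between_sector:
  assumes uw: "det2 u w = 1" and wv: "det2 w v = 1" and uv: "det2 u v > 0" and xy: "det2 x y > 0"
    and xw: "det2 x w > 0" and wy: "det2 w y > 0" and ux: "det2 u x \<ge> 0" and yv: "det2 y v \<ge> 0"
    and xt: "det2 x t > 0" and ty: "det2 t y > 0"
  shows "det2 u t > 0" "det2 t v > 0"
proof -
  have h1: "det2 u y = det2 y v + det2 w y * det2 u v" using uw wv unfolding det2_def by algebra
  have h2: "det2 x v = det2 u x + det2 x w * det2 u v" using uw wv unfolding det2_def by algebra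
  have c1: "det2 x y * det2 u t = det2 t y * det2 u x + det2 x t * det2 u y" by (rule cramer)
  have c2: "det2 x y * det2 t v = det2 t y * det2 x v + det2 x t * det2 y v"
    unfolding det2_def by (simp add: algebra_simps)
  have "det2 u y > 0" using h1 yv wy uv by (simp add: add_nonneg_pos)
  hence "det2 x y * det2 u t > 0" using c1 ty ux xt by (simp add: add_nonneg_pos)
  thus "det2 u t > 0" using xy by (simp add: zero_less_mult_iff)
  have "det2 x v > 0" using h2 ux xw uv by (simp add: add_nonneg_pos)
  hence "det2 x y * det2 t v > 0" using c2 ty yv xt by (simp add: add_pos_nonneg)
  thus "det2 t v > 0" using xy by (simp add: zero_less_mult_iff)
qed

lemma finite_cones: "finite S \<Longrightarrow> finite (completion_cones S)"
  by (rule finite_subset[of _ "S \<times> S"]) (auto simp: completion_cones_def)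

lemma card_cones_le:
  assumes fin: "finite S" and SP: "S \<subseteq> Collect primitive"
  shows "card (completion_cones S) \<le> card S"
proof -
  have "inj_on fst (completion_cones S)"
  proof (rule inj_onI)
    fix c1 c2 assume c1: "c1 \<in> completion_cones S" and c2: "c2 \<in> completion_cones S" and eq: "fst c1 = fst c2"
    obtain u v where c1e: "c1 = (u, v)" by (cases c1)
    obtain v' where c2e: "c2 = (u, v')" using eq c1e by (cases c2) simp
    have A: "u \<in> S" "v \<in> S" "det2 u v > 0" "\<not> (\<exists>t\<in>S. det2 u t > 0 \<and> det2 t v > 0)"
      using c1 c1e by (auto simp: completion_cones_def)
    have B: "v' \<in> S" "det2 u v' > 0" "\<not> (\<exists>t\<in>S. det2 u t > 0 \<and> det2 t v' > 0)"
      using c2 c2e by (auto simp: completion_cones_def)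
    have "v = v'"
    proof -
      consider "det2 v v' > 0" | "det2 v v' = 0" | "det2 v v' < 0" by linarith
      thus ?thesis
      proof cases
        case 1 thus ?thesis using A B by blast
      next
        case 3
        hence "det2 v' v > 0" using det_swap[of v' v] by simp
        thus ?thesis using A B by blast
      next
        case 2
        have pv: "primitive v" "primitive v'" using SP A B by auto
        obtain j where tj: "v' = (j * fst v, j * snd v)" using det_zero_multiple[OF pv(1) 2] by blast
        have "det2 u v' = j * det2 u v" using tj by (simp add: det2_def algebra_simps)
        hence "j > 0" using A(3) B(2) by (simp add: zero_less_mult_iff)
        moreover have "j dvd 1" using prim_mult_dvd[OF pv(2) tj] .
        ultimately have "j = 1" by (simp add: zdvd1_eq)
        thus ?thesis using tj by simp
      qed
    qed
    thus "c1 = c2" using c1e c2e by simp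
  qed
  moreover have "fst ` completion_cones S \<subseteq> S" by (auto simp: completion_cones_def)
  ultimately show ?thesis using fin by (metis card_image card_mono)
qed

lemma good_le_high:
  assumes SP: "S \<subseteq> Collect primitive" and fin: "finite S" and W': "W' \<subseteq> Wset N"
    and N: "N \<ge> 1" and L: "L \<ge> 8 * N"
    and good: "\<And>w. w \<in> W' \<Longrightarrow> uW L w \<in> S \<and> vW L w \<in> S \<and> w \<notin> S"
    and K: "K > 0" and KK: "\<And>w. w \<in> W' \<Longrightarrow> det2 (uW L w) (vW L w) \<ge> K"
  shows "card W' \<le> card {(x, y) \<in> completion_cones S. sing_index x y \<ge> K}"
proof -
  define H where "H = {(x, y) \<in> completion_cones S. sing_index x y \<ge> K}"
  define P where "P = (\<lambda>w c. c \<in> H \<and> det2 (fst c) (snd c) > 0 \<and> det2 (fst c) w > 0 \<and> det2 w (snd c) > 0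
                 \<and> det2 (uW L w) (fst c) \<ge> 0 \<and> det2 (snd c) (vW L w) \<ge> 0)"
  have L0: "L \<ge> 0" using L N by simp
  have ex: "\<exists>c. P w c" if w: "w \<in> W'" for w
  proof -
    have wW: "w \<in> Wset N" using w W' by auto
    note F = fam_basic[OF wW L0]
    have pw: "primitive w" using prim_det1[OF F(1)] by simp
    obtain x y where xy: "(x, y) \<in> completion_cones S" "det2 x y \<ge> K" "det2 x w > 0" "det2 w y > 0"
      "det2 (uW L w) x \<ge> 0" "det2 y (vW L w) \<ge> 0"
      using cone_exists[OF SP fin _ _ _ pw F(1) F(2) KK[OF w] K] good[OF w] by blast
    have "(x, y) \<in> H" using xy(1,2) by (auto simp: H_def sing_index_def)
    thus ?thesis using xy K unfolding P_def by (intro exI[of _ "(x, y)"]) auto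
  qed
  then obtain g where g: "\<And>w. w \<in> W' \<Longrightarrow> P w (g w)" by metis
  have "inj_on g W'"
  proof (rule inj_onI, rule ccontr)
    fix w w' assume w: "w \<in> W'" and w': "w' \<in> W'" and eq: "g w = g w'" and ne: "w \<noteq> w'"
    have wW: "w \<in> Wset N" "w' \<in> Wset N" using w w' W' by auto
    note F = fam_basic[OF wW(1) L0]
    have m4: "mW L w \<ge> 1"
    proof -
      have "det2 (uW L w) (vW L w) > 0" using KK[OF w] K by simp
      thus ?thesis using F(3) by simp
    qed
    have Pw: "P w (g w)" "P w' (g w)" using g[OF w] g[OF w'] eq by simp_all
    have "det2 (uW L w) w' > 0 \<and> det2 w' (vW L w) > 0"
      using between_sector[OF F(1) F(2) _ _ _ _ _ _ _ _, of "fst (g w)" "snd (g w)" w'] Pw F(3) m4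
      unfolding P_def by auto
    thus False using fam_dist(7)[OF wW L N ne] by blast
  qed
  moreover have "g ` W' \<subseteq> H" using g unfolding P_def by auto
  moreover have "finite H" using finite_cones[OF fin] unfolding H_def
    by (rule finite_subset[rotated]) auto
  ultimately show ?thesis unfolding H_def[symmetric] by (metis card_image card_mono)
qed



lemma inv_sq_sum: "(\<Sum>d\<in>{2..n}. 1 / (real d)^2) \<le> 2/3 - 2 / (2 * real n + 1)" if "n \<ge> 1" for n :: nat
  using that
proof (induction n rule: dec_induct)
  case base thus ?case by simp
next
  case (step n)
  have "(\<Sum>d\<in>{2..Suc n}. 1 / (real d)^2) = (\<Sum>d\<in>{2..n}. 1 / (real d)^2) + 1 / (real (Suc n))^2"
    using step(1) by (simp add: sum.atLeast_Suc_atMost_Suc_shift atLeastAtMostSuc_conv)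
  also have "\<dots> \<le> 2/3 - 2 / (2 * real n + 1) + 1 / (real (Suc n))^2" using step(3) by simp
  also have "\<dots> \<le> 2/3 - 2 / (2 * real (Suc n) + 1)"
  proof -
    have e: "2 / (2 * real n + 1) - 2 / (2 * real n + 3) = 4 / ((2 * real n + 1) * (2 * real n + 3))"
      by (simp add: field_simps)
    have p1: "(2 * real n + 1) * (2 * real n + 3) \<le> 4 * (real n + 1)^2" by (simp add: power2_eq_square algebra_simps)
    have p2: "0 < 4 * (real n + 1)^2 * ((2 * real n + 1) * (2 * real n + 3))" by (intro mult_pos_pos) auto
    have "4 / (4 * (real n + 1)^2) \<le> 4 / ((2 * real n + 1) * (2 * real n + 3))"
      by (rule divide_left_mono[OF p1 _ p2]) simp
    hence h: "1 / (real n + 1)^2 \<le> 2 / (2 * real n + 1) - 2 / (2 * real n + 3)" using e by simp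
    have q: "2 * real (Suc n) + 1 = 2 * real n + 3" by simp
    have "1 / (real (Suc n))^2 \<le> 2 / (2 * real n + 1) - 2 / (2 * real (Suc n) + 1)"
      unfolding q using h by (simp add: add.commute)
    thus ?thesis by linarith
  qed
  finally show ?case .
qed

lemma card_mult_le: "card {a \<in> {1..n}. d dvd a} \<le> n div d" if "d \<ge> 1" for n d :: nat
proof -
  have "{a \<in> {1..n}. d dvd a} \<subseteq> (\<lambda>j. d * j) ` {1..n div d}"
  proof
    fix a assume "a \<in> {a \<in> {1..n}. d dvd a}"
    then obtain j where a: "a = d * j" "1 \<le> a" "a \<le> n" by auto
    have "j \<ge> 1" using a by (cases j) auto
    moreover have "j \<le> n div d" using a that by (metis div_le_mono nonzero_mult_div_cancel_left not_one_le_zero)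
    ultimately show "a \<in> (\<lambda>j. d * j) ` {1..n div d}" using a by auto
  qed
  hence "card {a \<in> {1..n}. d dvd a} \<le> card ((\<lambda>j. d * j) ` {1..n div d})" by (intro card_mono) auto
  also have "\<dots> \<le> card {1..n div d}" by (rule card_image_le) simp
  finally show ?thesis by simp
qed

lemma coprime_count:
  fixes n :: nat
  assumes "n \<ge> 1"
  shows "real (card {p \<in> {1..n} \<times> {1..n}. coprime (fst p) (snd p)}) \<ge> real n ^ 2 / 3"
proof -
  define box where "box = {1..n} \<times> {1..n}"
  define C where "C = {p \<in> box. coprime (fst p) (snd p)}"
  define D where "D = {p \<in> box. \<not> coprime (fst p) (snd p)}"
  define M where "M = (\<lambda>d. {a \<in> {1..n}. d dvd a} \<times> {a \<in> {1..n}. d dvd a})"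
  have fb: "finite box" by (simp add: box_def)
  have split: "card box = card C + card D"
  proof -
    have "box = C \<union> D" "C \<inter> D = {}" by (auto simp: C_def D_def)
    thus ?thesis using fb by (metis card_Un_disjoint finite_Un)
  qed
  have cb: "card box = n * n" by (simp add: box_def)
  have DM: "D \<subseteq> (\<Union>d\<in>{2..n}. M d)"
  proof
    fix p assume p: "p \<in> D"
    obtain a b where pab: "p = (a, b)" by (cases p)
    have ab: "1 \<le> a" "a \<le> n" "1 \<le> b" "b \<le> n" "\<not> coprime a b" using p pab by (auto simp: D_def box_def)
    define g where "g = gcd a b"
    have "g \<noteq> 1" using ab(5) by (simp add: g_def coprime_iff_gcd_eq_1)
    moreover have "g > 0" using ab by (simp add: g_def)
    ultimately have "g \<ge> 2" by simp
    moreover have "g \<le> n" using ab by (metis g_def gcd_le1_nat not_one_le_zero order.trans)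
    moreover have "g dvd a" "g dvd b" by (simp_all add: g_def)
    ultimately show "p \<in> (\<Union>d\<in>{2..n}. M d)" using ab pab by (auto simp: M_def)
  qed
  have "card D \<le> card (\<Union>d\<in>{2..n}. M d)" by (rule card_mono[OF _ DM]) (auto simp: M_def)
  also have "\<dots> \<le> (\<Sum>d\<in>{2..n}. card (M d))" by (rule card_UN_le) simp
  finally have cD: "real (card D) \<le> (\<Sum>d\<in>{2..n}. real (card (M d)))" by (metis of_nat_le_iff of_nat_sum)
  have "(\<Sum>d\<in>{2..n}. real (card (M d))) \<le> (\<Sum>d\<in>{2..n}. real n ^ 2 * (1 / (real d)^2))"
  proof (intro sum_mono)
    fix d assume d: "d \<in> {2..n}"
    have "card (M d) = card {a \<in> {1..n}. d dvd a} * card {a \<in> {1..n}. d dvd a}" by (simp add: M_def card_cartesian_product)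
    also have "\<dots> \<le> (n div d) * (n div d)" using card_mult_le[of d n] d by (intro mult_mono) auto
    finally have "real (card (M d)) \<le> real (n div d) * real (n div d)" by (metis of_nat_le_iff of_nat_mult)
    also have "\<dots> \<le> (real n / real d) * (real n / real d)"
      by (intro mult_mono) (simp_all add: of_nat_div_le_of_nat)
    also have "\<dots> = real n ^ 2 * (1 / (real d)^2)" by (simp add: field_simps power2_eq_square)
    finally show "real (card (M d)) \<le> real n ^ 2 * (1 / (real d)^2)" .
  qed
  also have "\<dots> = real n ^ 2 * (\<Sum>d\<in>{2..n}. 1 / (real d)^2)" by (simp add: sum_distrib_left)
  also have "\<dots> \<le> real n ^ 2 * (2 / 3)"
  proof -
    have "(\<Sum>d\<in>{2..n}. 1 / (real d)^2) \<le> 2/3" using inv_sq_sum[OF assms] by (smt (verit) divide_nonneg_nonneg of_nat_0_le_iff)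
    thus ?thesis by (intro mult_left_mono) simp_all
  qed
  finally have "real (card D) \<le> real n ^ 2 * (2/3)" using cD by linarith
  moreover have "real (card box) = real n ^ 2" using cb by (simp add: power2_eq_square)
  ultimately have "real (card C) \<ge> real n ^ 2 / 3" using split by simp
  thus ?thesis by (simp add: C_def box_def)
qed

lemma Wset_card:
  fixes n :: nat
  assumes "n \<ge> 1"
  shows "real (card (Wset (int n))) \<ge> real n ^ 2 / 3" "finite (Wset (int n))"
proof -
  define C where "C = {p \<in> {1..n} \<times> {1..n}. coprime (fst p) (snd p)}"
  have fin: "finite (Wset (int n))"
    by (rule finite_subset[of _ "{1..int n} \<times> {1..int n}"]) (auto simp: Wset_def)
  thus "finite (Wset (int n))" .
  have "(\<lambda>p. (int (fst p), int (snd p))) ` C \<subseteq> Wset (int n)"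
    by (auto simp: C_def Wset_def)
  moreover have "inj_on (\<lambda>p. (int (fst p), int (snd p))) C" by (auto simp: inj_on_def prod_eq_iff)
  ultimately have "card C \<le> card (Wset (int n))" using fin by (metis card_image card_mono)
  thus "real (card (Wset (int n))) \<ge> real n ^ 2 / 3" using coprime_count[OF assms] unfolding C_def by linarith
qed



lemma prod_pattern:
  fixes p :: real
  assumes "finite R" "Tt \<subseteq> R" "Ff \<subseteq> R" "Tt \<inter> Ff = {}"
  shows "(\<Prod>x\<in>R. (if x \<in> Tt then p else if x \<in> Ff then 1 - p else 1)) = p ^ card Tt * (1 - p) ^ card Ff"
proof -
  have fT: "finite Tt" "finite Ff" using assms by (auto intro: finite_subset)
  have "(\<Prod>x\<in>R. (if x \<in> Tt then p else if x \<in> Ff then 1 - p else 1))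
        = (\<Prod>x\<in>Tt \<union> Ff. (if x \<in> Tt then p else if x \<in> Ff then 1 - p else 1))"
    using assms by (intro prod.mono_neutral_right) auto
  also have "\<dots> = (\<Prod>x\<in>Tt. (if x \<in> Tt then p else if x \<in> Ff then 1 - p else 1)) *
                  (\<Prod>x\<in>Ff. (if x \<in> Tt then p else if x \<in> Ff then 1 - p else 1))"
    using fT assms(4) by (rule prod.union_disjoint)
  also have "\<dots> = (\<Prod>x\<in>Tt. p) * (\<Prod>x\<in>Ff. 1 - p)"
    using assms(4) by (intro arg_cong2[where f="(*)"] prod.cong) auto
  finally show ?thesis by simp
qed

lemma prob_pattern:
  fixes p :: real
  assumes "finite R" "Tt \<subseteq> R" "Ff \<subseteq> R" "Tt \<inter> Ff = {}" "0 \<le> p" "p \<le> 1"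
  shows "measure_pmf.prob (Pi_pmf R False (\<lambda>_. bernoulli_pmf p)) {f. (\<forall>x\<in>Tt. f x) \<and> (\<forall>x\<in>Ff. \<not> f x)}
         = p ^ card Tt * (1 - p) ^ card Ff"
proof -
  define B where "B = (\<lambda>x. if x \<in> Tt then {True} else if x \<in> Ff then {False} else (UNIV :: bool set))"
  have eq: "{f. (\<forall>x\<in>Tt. f x) \<and> (\<forall>x\<in>Ff. \<not> f x)} = Pi R B"
    using assms(2,3,4) by (auto simp: B_def Pi_def split: if_splits)
  have "measure_pmf.prob (Pi_pmf R False (\<lambda>_. bernoulli_pmf p)) (Pi R B)
        = (\<Prod>x\<in>R. measure_pmf.prob (bernoulli_pmf p) (B x))"
    using assms(1) by (rule measure_Pi_pmf_Pi)
  also have "\<dots> = (\<Prod>x\<in>R. (if x \<in> Tt then p else if x \<in> Ff then 1 - p else 1))"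
    using assms(5,6) by (intro prod.cong) (auto simp: B_def measure_pmf_single)
  also have "\<dots> = p ^ card Tt * (1 - p) ^ card Ff" using assms(1-4) by (rule prod_pattern)
  finally show ?thesis using eq by simp
qed

lemma concentration:
  fixes p :: real and I :: "'i set" and Tt Ff :: "'i \<Rightarrow> 'a set"
  assumes finR: "finite R" and finI: "finite I" and p: "0 \<le> p" "p \<le> 1"
    and sub: "\<And>i. i \<in> I \<Longrightarrow> Tt i \<subseteq> R \<and> Ff i \<subseteq> R \<and> Tt i \<inter> Ff i = {}"
    and cT: "\<And>i. i \<in> I \<Longrightarrow> card (Tt i) = nT" and cF: "\<And>i. i \<in> I \<Longrightarrow> card (Ff i) = nF"
    and disj: "\<And>i j. i \<in> I \<Longrightarrow> j \<in> I \<Longrightarrow> i \<noteq> j \<Longrightarrow> (Tt i \<union> Ff i) \<inter> (Tt j \<union> Ff j) = {}"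
    and rho: "rho = p ^ nT * (1 - p) ^ nF" "rho > 0" and Ipos: "card I > 0"
  shows "measure_pmf.prob (Pi_pmf R False (\<lambda>_. bernoulli_pmf p))
           {f. real (card {i\<in>I. (\<forall>x\<in>Tt i. f x) \<and> (\<forall>x\<in>Ff i. \<not> f x)}) > rho * card I / 2}
         \<ge> 1 - 4 / (rho * card I)"
proof -
  define P where "P = Pi_pmf R False (\<lambda>_. bernoulli_pmf p)"
  define E where "E = (\<lambda>i. {f. (\<forall>x\<in>Tt i. f x) \<and> (\<forall>x\<in>Ff i. \<not> f x)})"
  define X where "X = (\<lambda>f. \<Sum>i\<in>I. indicator (E i) f :: real)"
  define n where "n = real (card I)"
  have Xcard: "X f = real (card {i\<in>I. (\<forall>x\<in>Tt i. f x) \<and> (\<forall>x\<in>Ff i. \<not> f x)})" for f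
  proof -
    have "X f = (\<Sum>i\<in>{i\<in>I. f \<in> E i}. 1)"
      unfolding X_def using finI by (simp add: indicator_def sum.If_cases[OF finI] Int_def)
    thus ?thesis by (simp add: E_def)
  qed
  have PE: "measure_pmf.prob P (E i) = rho" if "i \<in> I" for i
    unfolding P_def E_def using prob_pattern[OF finR, of "Tt i" "Ff i" p] sub[OF that] p cT[OF that] cF[OF that] rho
    by simp
  have PEE: "measure_pmf.prob P (E i \<inter> E j) = rho ^ 2" if "i \<in> I" "j \<in> I" "i \<noteq> j" for i j
  proof -
    have "E i \<inter> E j = {f. (\<forall>x\<in>Tt i \<union> Tt j. f x) \<and> (\<forall>x\<in>Ff i \<union> Ff j. \<not> f x)}"
      by (auto simp: E_def)
    moreover have "card (Tt i \<union> Tt j) = 2 * nT" "card (Ff i \<union> Ff j) = 2 * nF"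
    proof -
      have f: "finite (Tt i)" "finite (Tt j)" "finite (Ff i)" "finite (Ff j)"
        using sub that finR finite_subset by meson+
      have "Tt i \<inter> Tt j = {}" "Ff i \<inter> Ff j = {}" using disj[OF that] by auto
      thus "card (Tt i \<union> Tt j) = 2 * nT" "card (Ff i \<union> Ff j) = 2 * nF"
        using f cT cF that by (simp_all add: card_Un_disjoint)
    qed
    moreover have "(Tt i \<union> Tt j) \<inter> (Ff i \<union> Ff j) = {}"
      using disj[OF that] sub that by blast
    ultimately have "measure_pmf.prob P (E i \<inter> E j) = p ^ (2 * nT) * (1 - p) ^ (2 * nF)"
      unfolding P_def using prob_pattern[OF finR, of "Tt i \<union> Tt j" "Ff i \<union> Ff j" p] sub that p by simp
    also have "\<dots> = rho ^ 2" using rho by (simp add: power_mult_distrib power_mult[symmetric] mult.commute)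
    finally show ?thesis .
  qed
  have bnd: "integrable (measure_pmf P) Y" if "\<And>f. \<bar>Y f\<bar> \<le> C" for Y :: "_ \<Rightarrow> real" and C
    by (rule measure_pmf.integrable_const_bound[where B=C]) (use that in auto)
  have Xb: "\<bar>X f\<bar> \<le> n" for f
  proof -
    have "\<bar>X f\<bar> \<le> (\<Sum>i\<in>I. \<bar>indicator (E i) f :: real\<bar>)" unfolding X_def by (rule sum_abs)
    also have "\<dots> \<le> (\<Sum>i\<in>I. 1)" by (intro sum_mono) (auto simp: indicator_def)
    finally show ?thesis by (simp add: n_def)
  qed
  have intX: "integrable (measure_pmf P) X" using Xb by (rule bnd)
  have X2b: "\<bar>(X f)\<^sup>2\<bar> \<le> n ^ 2" for f
  proof -
    have "\<bar>X f\<bar> ^ 2 \<le> n ^ 2" by (rule power_mono) (use Xb[of f] in auto)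
    thus ?thesis by simp
  qed
  have intX2: "integrable (measure_pmf P) (\<lambda>f. (X f)\<^sup>2)" using X2b by (rule bnd)
  have intI: "integrable (measure_pmf P) (indicator A :: _ \<Rightarrow> real)" for A
    by (rule bnd[of _ 1]) (auto simp: indicator_def)
  have EX: "measure_pmf.expectation P X = rho * n"
  proof -
    have "measure_pmf.expectation P X = (\<Sum>i\<in>I. measure_pmf.expectation P (indicator (E i)))"
      unfolding X_def using intI by (rule Bochner_Integration.integral_sum)
    also have "\<dots> = (\<Sum>i\<in>I. rho)" using PE by (intro sum.cong) auto
    finally show ?thesis by (simp add: n_def)
  qed
  have EX2: "measure_pmf.expectation P (\<lambda>f. (X f)\<^sup>2) = n * rho + n * (n - 1) * rho ^ 2"
  proof -
    have sq: "(X f)\<^sup>2 = (\<Sum>i\<in>I. \<Sum>j\<in>I. indicator (E i \<inter> E j) f)" for f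
      unfolding X_def power2_eq_square sum_product by (simp add: indicator_inter_arith)
    have "measure_pmf.expectation P (\<lambda>f. (X f)\<^sup>2) = (\<Sum>i\<in>I. \<Sum>j\<in>I. measure_pmf.expectation P (indicator (E i \<inter> E j)))"
      unfolding sq using intI
      by (simp add: Bochner_Integration.integral_sum Bochner_Integration.integrable_sum)
    also have "\<dots> = (\<Sum>i\<in>I. \<Sum>j\<in>I. if j = i then rho else rho ^ 2)"
      using PE PEE by (intro sum.cong refl) auto
    also have "\<dots> = (\<Sum>i\<in>I. rho + (n - 1) * rho ^ 2)"
    proof (intro sum.cong refl)
      fix i assume i: "i \<in> I"
      have "(\<Sum>j\<in>I. if j = i then rho else rho ^ 2) = rho + (\<Sum>j\<in>I - {i}. if j = i then rho else rho ^ 2)"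
        using finI i by (simp add: sum.remove)
      also have "(\<Sum>j\<in>I - {i}. if j = i then rho else rho ^ 2) = (\<Sum>j\<in>I - {i}. rho ^ 2)"
        by (intro sum.cong) auto
      also have "\<dots> = (n - 1) * rho ^ 2" using finI i Ipos by (simp add: n_def card_Diff_singleton of_nat_diff)
      finally show "(\<Sum>j\<in>I. if j = i then rho else rho ^ 2) = rho + (n - 1) * rho ^ 2" .
    qed
    also have "\<dots> = n * rho + n * (n - 1) * rho ^ 2" by (simp add: n_def algebra_simps)
    finally show ?thesis .
  qed
  have Var: "measure_pmf.expectation P (\<lambda>f. (X f - measure_pmf.expectation P X)\<^sup>2) = n * (rho - rho ^ 2)"
    using measure_pmf.variance_eq[OF intX intX2] EX EX2 by (simp add: algebra_simps power2_eq_square)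
  have npos: "n > 0" using Ipos by (simp add: n_def)
  have a: "rho * n / 2 > 0" using rho npos by simp
  have cheb: "measure_pmf.prob P {f \<in> space (measure_pmf P). rho * n / 2 \<le> \<bar>X f - measure_pmf.expectation P X\<bar>}
      \<le> n * (rho - rho ^ 2) / (rho * n / 2)\<^sup>2"
    using measure_pmf.Chebyshev_inequality[OF _ intX2 a] Var by simp
  also have "\<dots> = 4 * (1 - rho) / (rho * n)" using npos rho(2) by (simp add: field_simps power2_eq_square)
  also have "\<dots> \<le> 4 / (rho * n)" using rho npos by (simp add: divide_right_mono)
  finally have cheb': "measure_pmf.prob P {f. rho * n / 2 \<le> \<bar>X f - rho * n\<bar>} \<le> 4 / (rho * n)"
    using EX by simp
  have sub': "UNIV - {f. rho * n / 2 \<le> \<bar>X f - rho * n\<bar>} \<subseteq> {f. X f > rho * n / 2}"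
  proof
    fix f assume "f \<in> UNIV - {f. rho * n / 2 \<le> \<bar>X f - rho * n\<bar>}"
    hence "\<bar>X f - rho * n\<bar> < rho * n / 2" by auto
    moreover have "- (X f - rho * n) \<le> \<bar>X f - rho * n\<bar>" by (rule abs_ge_minus_self)
    ultimately show "f \<in> {f. X f > rho * n / 2}" by simp
  qed
  have "1 - 4 / (rho * n) \<le> 1 - measure_pmf.prob P {f. rho * n / 2 \<le> \<bar>X f - rho * n\<bar>}" using cheb' by simp
  also have "\<dots> = measure_pmf.prob P (UNIV - {f. rho * n / 2 \<le> \<bar>X f - rho * n\<bar>})"
    using measure_pmf.prob_compl[of "{f. rho * n / 2 \<le> \<bar>X f - rho * n\<bar>}" P] by simp
  also have "\<dots> \<le> measure_pmf.prob P {f. X f > rho * n / 2}"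
    using sub' by (intro measure_pmf.finite_measure_mono) auto
  finally show ?thesis unfolding P_def n_def Xcard .
qed



lemma rays_sub: "rays_upto h \<subseteq> {-int h..int h} \<times> {-int h..int h}"
  by (auto simp: rays_upto_def maxnorm_def)

lemma rays_fin: "finite (rays_upto h)"
  by (rule finite_subset[OF rays_sub]) simp

lemma rays_card: "real (card (rays_upto h)) \<le> (2 * real h + 1)^2"
proof -
  have "card (rays_upto h) \<le> card ({-int h..int h} \<times> {-int h..int h})"
    by (rule card_mono[OF _ rays_sub]) simp
  also have "\<dots> = (2 * h + 1) * (2 * h + 1)"
  proof -
    have "int h - - int h + 1 = int (2 * h + 1)" by simp
    hence "card {-int h..int h} = 2 * h + 1" by (simp only: card_atLeastAtMost_int nat_int)
    thus ?thesis by (simp add: card_cartesian_product)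
  qed
  finally have "real (card (rays_upto h)) \<le> real ((2 * h + 1) * (2 * h + 1))" by (simp only: of_nat_le_iff)
  thus ?thesis by (simp add: power2_eq_square algebra_simps)
qed

lemma main_bound:
  fixes k h :: nat and q :: real
  assumes k: "k > 1" and q: "0 < q" "q < 1" and h: "h \<ge> 2 * (2 * k + 9)"
  defines "B \<equiv> 2 * k + 9" and "rho \<equiv> (1 - q)^2 * q"
  shows "measure_pmf.prob (ray_choice h (1 - q)) {f. delta k {u. f u} > rho / (216 * real B ^ 2)}
         \<ge> 1 - (48 * real B ^ 2 / rho) / real h"
proof -
  define n where "n = h div B"
  define N where "N = int n"
  define L where "L = 2 * N * (int k + 4)"
  define W where "W = Wset N"
  define R where "R = rays_upto h"
  define p where "p = 1 - q"
  have B0: "B > 0" by (simp add: B_def)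
  have rho0: "rho > 0" using q by (simp add: rho_def)
  have nB: "n * B \<le> h" by (simp add: n_def)
  have hlt: "h < (n + 1) * B" using B0 by (simp add: n_def) (metis add.commute div_mult_mod_eq mod_less_divisor
     add_less_cancel_left mult.commute mult_Suc_right plus_1_eq_Suc)
  have n1: "n \<ge> 1"
  proof (rule ccontr)
    assume "\<not> n \<ge> 1" hence "n = 0" by simp
    thus False using hlt h by (simp add: B_def)
  qed
  have nreal: "real n \<ge> real h / (2 * real B)"
  proof -
    have "real h < (real n + 1) * real B" using hlt by (metis of_nat_1 of_nat_add of_nat_less_iff of_nat_mult)
    hence "real h / real B < real n + 1" using B0 by (simp add: divide_less_eq)
    moreover have "real h / real B \<ge> 2" using h B0 by (simp add: le_divide_eq B_def)
    ultimately show ?thesis using B0 by (simp add: field_simps)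
  qed
  have N1: "N \<ge> 1" using n1 by (simp add: N_def)
  have L0: "L \<ge> 0" using N1 by (simp add: L_def)
  have L8: "L \<ge> 8 * N" using N1 by (simp add: L_def algebra_simps)
  have LN: "L + N \<le> int h"
  proof -
    have "L + N = int (n * B)" by (simp add: L_def N_def B_def algebra_simps)
    thus ?thesis using nB by linarith
  qed
  have Ldiv: "L div (2 * N) = int k + 4"
  proof -
    have "L = (int k + 4) * (2 * N)" by (simp add: L_def algebra_simps)
    thus ?thesis using N1 by simp
  qed
  have finW: "finite W" and cardW: "real (card W) \<ge> real n ^ 2 / 3"
    using Wset_card[OF n1] by (simp_all add: W_def N_def)
  have Wpos: "card W > 0"
  proof -
    have "real n ^ 2 / 3 > 0" using n1 by simp
    thus ?thesis using cardW by linarith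
  qed
  have finR: "finite R" by (simp add: R_def rays_fin)
  have inR: "uW L w \<in> R" "vW L w \<in> R" "w \<in> R" if w: "w \<in> W" for w
  proof -
    have wW: "w \<in> Wset N" using w by (simp add: W_def)
    note F = fam_basic[OF wW L0]
    have "primitive (uW L w)" "primitive w" using prim_det1[OF F(1)] by simp_all
    moreover have "primitive (vW L w)" using prim_det1[OF F(2)] by simp
    moreover have "maxnorm w \<le> int h" using wW LN L0 by (auto simp: Wset_def maxnorm_def)
    ultimately show "uW L w \<in> R" "vW L w \<in> R" "w \<in> R" using F(9,10) LN by (auto simp: R_def rays_upto_def)
  qed
  have detK: "det2 (uW L w) (vW L w) \<ge> int k" if w: "w \<in> W" for w
  proof -
    have wW: "w \<in> Wset N" using w by (simp add: W_def)
    note F = fam_basic[OF wW L0]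
    show ?thesis using F(3) F(8) Ldiv by linarith
  qed
  define Tt where "Tt = (\<lambda>w. {uW L w, vW L w})"
  define Ff where "Ff = (\<lambda>w::int \<times> int. {w})"
  have distinct: "uW L w \<noteq> vW L w" "uW L w \<noteq> w" "vW L w \<noteq> w" if "w \<in> W" for w
    using fam_dist(1,2,3)[of w N w L] that L8 N1 by (simp_all add: W_def)
  have conc: "measure_pmf.prob (Pi_pmf R False (\<lambda>_. bernoulli_pmf p))
           {f. real (card {i\<in>W. (\<forall>x\<in>Tt i. f x) \<and> (\<forall>x\<in>Ff i. \<not> f x)}) > rho * card W / 2}
         \<ge> 1 - 4 / (rho * card W)"
  proof (rule concentration[OF finR finW, of p _ _ 2 1])
    show "0 \<le> p" "p \<le> 1" using q by (simp_all add: p_def)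
    show "\<And>i. i \<in> W \<Longrightarrow> Tt i \<subseteq> R \<and> Ff i \<subseteq> R \<and> Tt i \<inter> Ff i = {}"
      using inR distinct by (auto simp: Tt_def Ff_def)
    show "\<And>i. i \<in> W \<Longrightarrow> card (Tt i) = 2" using distinct by (simp add: Tt_def)
    show "\<And>i. i \<in> W \<Longrightarrow> card (Ff i) = 1" by (simp add: Ff_def)
    show "\<And>i j. i \<in> W \<Longrightarrow> j \<in> W \<Longrightarrow> i \<noteq> j \<Longrightarrow> (Tt i \<union> Ff i) \<inter> (Tt j \<union> Ff j) = {}"
    proof -
      fix i j assume ij: "i \<in> W" "j \<in> W" "i \<noteq> j"
      have iW: "i \<in> Wset N" "j \<in> Wset N" using ij by (simp_all add: W_def)
      note D1 = fam_dist[OF iW(1) iW(2) L8 N1] and D2 = fam_dist[OF iW(2) iW(1) L8 N1]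
      have "j \<noteq> i" using ij by simp
      show "(Tt i \<union> Ff i) \<inter> (Tt j \<union> Ff j) = {}"
        using D1(1,2) D2(1,2) D1(4,5,6)[OF ij(3)] D2(6)[OF \<open>j \<noteq> i\<close>] ij(3)
        by (auto simp: Tt_def Ff_def)
    qed
    show "rho = p ^ 2 * (1 - p) ^ 1" by (simp add: rho_def p_def)
  qed (use rho0 Wpos in auto)
  define c where "c = rho / (216 * real B ^ 2)"
  have key: "f \<in> {f. real (card {i\<in>W. (\<forall>x\<in>Tt i. f x) \<and> (\<forall>x\<in>Ff i. \<not> f x)}) > rho * card W / 2}
               \<inter> set_pmf (Pi_pmf R False (\<lambda>_. bernoulli_pmf p)) \<Longrightarrow> delta k {u. f u} > c" for f
  proof -
    assume fa: "f \<in> {f. real (card {i\<in>W. (\<forall>x\<in>Tt i. f x) \<and> (\<forall>x\<in>Ff i. \<not> f x)}) > rho * card W / 2}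
               \<inter> set_pmf (Pi_pmf R False (\<lambda>_. bernoulli_pmf p))"
    define G where "G = {i\<in>W. (\<forall>x\<in>Tt i. f x) \<and> (\<forall>x\<in>Ff i. \<not> f x)}"
    define S where "S = {u. f u}"
    have cG: "real (card G) > rho * card W / 2" using fa by (simp add: G_def)
    have SR: "S \<subseteq> R" using fa set_Pi_pmf_subset[OF finR, of False "\<lambda>_. bernoulli_pmf p"]
      by (auto simp: S_def)
    have finS: "finite S" using SR finR finite_subset by blast
    have SP: "S \<subseteq> Collect primitive" using SR by (auto simp: R_def rays_upto_def)
    define H where "H = {(x, y) \<in> completion_cones S. sing_index x y \<ge> int k}"
    have GH: "card G \<le> card H" unfolding H_def
    proof (rule good_le_high[OF SP finS _ N1 L8])
      show "G \<subseteq> Wset N" by (auto simp: G_def W_def)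
      show "\<And>w. w \<in> G \<Longrightarrow> uW L w \<in> S \<and> vW L w \<in> S \<and> w \<notin> S" by (auto simp: G_def S_def Tt_def Ff_def)
      show "int k > 0" using k by simp
      show "\<And>w. w \<in> G \<Longrightarrow> det2 (uW L w) (vW L w) \<ge> int k" using detK by (auto simp: G_def)
    qed
    have cones: "real (card (completion_cones S)) \<le> (2 * real h + 1)^2"
    proof -
      have "card (completion_cones S) \<le> card S" by (rule card_cones_le[OF finS SP])
      also have "\<dots> \<le> card R" by (rule card_mono[OF finR SR])
      finally have "real (card (completion_cones S)) \<le> real (card R)" by simp
      thus ?thesis using rays_card[of h] by (simp add: R_def)
    qed
    have Hpos: "real (card H) > 0" using GH cG rho0 Wpos
      by (smt (verit) of_nat_0_less_iff of_nat_le_iff zero_less_mult_iff divide_pos_pos of_nat_0_le_iff)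
    have Hsub: "H \<subseteq> completion_cones S" by (auto simp: H_def)
    have cpos: "real (card (completion_cones S)) > 0"
    proof -
      have "card H \<le> card (completion_cones S)" by (rule card_mono[OF finite_cones[OF finS] Hsub])
      thus ?thesis using Hpos by linarith
    qed
    have dl: "delta k S = real (card H) / real (card (completion_cones S))"
      by (simp add: delta_def H_def)
    have "delta k S \<ge> real (card H) / (2 * real h + 1)^2"
      unfolding dl using cones cpos Hpos by (intro divide_left_mono) simp_all
    moreover have "real (card H) / (2 * real h + 1)^2 > (rho * card W / 2) / (2 * real h + 1)^2"
      using GH cG by (intro divide_strict_right_mono) simp_all
    moreover have "(rho * card W / 2) / (2 * real h + 1)^2 \<ge> c"
    proof -
      have h1: "real h \<ge> 1" using h by simp
      have hh: "real h \<le> real h * real h" using mult_right_mono[of 1 "real h" "real h"] h1 by simp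
      have "(2 * real h + 1)^2 = 4 * (real h * real h) + 4 * real h + 1" by (simp add: power2_eq_square algebra_simps)
      also have "\<dots> \<le> 9 * (real h * real h)" using hh h1 by linarith
      finally have A: "(2 * real h + 1)^2 \<le> 9 * (real h)^2" by (simp add: power2_eq_square)
      have Bf: "rho * card W / 2 \<ge> rho * (real h ^ 2 / (4 * real B ^ 2)) / 6"
      proof -
        have "real n ^ 2 \<ge> (real h / (2 * real B)) ^ 2" using nreal B0 by (intro power_mono) simp_all
        hence "real n ^ 2 \<ge> real h ^ 2 / (4 * real B ^ 2)" by (simp add: power_divide power_mult_distrib)
        hence "real h ^ 2 / (4 * real B ^ 2) / 3 \<le> real n ^ 2 / 3" by (rule divide_right_mono) simp
        hence "real (card W) \<ge> real h ^ 2 / (4 * real B ^ 2) / 3" using cardW by linarith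
        thus ?thesis using rho0 by (simp add: divide_simps)
      qed
      have "(rho * card W / 2) / (2 * real h + 1)^2 \<ge> (rho * (real h ^ 2 / (4 * real B ^ 2)) / 6) / (9 * (real h)^2)"
        by (rule frac_le[OF _ Bf _ A]) (use rho0 h1 in simp_all)
      also have "(rho * (real h ^ 2 / (4 * real B ^ 2)) / 6) / (9 * (real h)^2) = c"
        using h1 B0 by (simp add: c_def field_simps power2_eq_square)
      finally show ?thesis .
    qed
    ultimately show "delta k {u. f u} > c" by (simp add: S_def)
  qed
  have "1 - (48 * real B ^ 2 / rho) / real h \<le> 1 - 4 / (rho * card W)"
  proof -
    have h1: "real h \<ge> 1" using h by simp
    have "real (card W) \<ge> real h ^ 2 / (12 * real B ^ 2)"
    proof -
      have "real n ^ 2 \<ge> (real h / (2 * real B)) ^ 2" using nreal B0 by (intro power_mono) simp_all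
      hence "real n ^ 2 \<ge> real h ^ 2 / (4 * real B ^ 2)" by (simp add: power_divide power_mult_distrib)
      thus ?thesis using cardW by (simp add: field_simps)
    qed
    hence "real (card W) \<ge> real h / (12 * real B ^ 2)" using h1 B0
      by (smt (verit) divide_right_mono power2_eq_square mult_le_cancel_right1 zero_le_power2 of_nat_0_le_iff)
    hence le: "rho * (real h / (12 * real B ^ 2)) \<le> rho * card W"
      using rho0 by (intro mult_left_mono) simp_all
    have pos: "0 < rho * card W * (rho * (real h / (12 * real B ^ 2)))"
      using rho0 h1 B0 Wpos by (intro mult_pos_pos divide_pos_pos) simp_all
    have "4 / (rho * card W) \<le> 4 / (rho * (real h / (12 * real B ^ 2)))"
      by (rule divide_left_mono[OF le _ pos]) simp
    also have "\<dots> = (48 * real B ^ 2 / rho) / real h" using rho0 h1 B0 by (simp add: field_simps)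
    finally show ?thesis by simp
  qed
  also have "\<dots> \<le> measure_pmf.prob (Pi_pmf R False (\<lambda>_. bernoulli_pmf p))
           {f. real (card {i\<in>W. (\<forall>x\<in>Tt i. f x) \<and> (\<forall>x\<in>Ff i. \<not> f x)}) > rho * card W / 2}" by (rule conc)
  also have "\<dots> = measure_pmf.prob (Pi_pmf R False (\<lambda>_. bernoulli_pmf p))
           ({f. real (card {i\<in>W. (\<forall>x\<in>Tt i. f x) \<and> (\<forall>x\<in>Ff i. \<not> f x)}) > rho * card W / 2}
            \<inter> set_pmf (Pi_pmf R False (\<lambda>_. bernoulli_pmf p)))" by (simp add: measure_Int_set_pmf)
  also have "\<dots> \<le> measure_pmf.prob (Pi_pmf R False (\<lambda>_. bernoulli_pmf p)) {f. delta k {u. f u} > c}"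
    using key by (intro measure_pmf.finite_measure_mono) auto
  finally show ?thesis by (simp add: ray_choice_def R_def p_def c_def)
qed

theorem theorem2:
  fixes k :: nat and q :: real
  assumes "k > 1" and "0 < q" and "q < 1"
  shows "\<exists>c>0. (\<lambda>h. measure_pmf.prob (ray_choice h (1 - q))
                        {f. delta k {u. f u} > c}) \<longlonglongrightarrow> 1"
proof -
  define B where "B = 2 * k + 9"
  define rho where "rho = (1 - q)^2 * q"
  define C where "C = 48 * real B ^ 2 / rho"
  have rho0: "rho > 0" using assms by (simp add: rho_def)
  have c0: "rho / (216 * real B ^ 2) > 0" using rho0 by (simp add: B_def)
  have lower: "eventually (\<lambda>h. 1 - C / real h \<le> measure_pmf.prob (ray_choice h (1 - q))
                        {f. delta k {u. f u} > rho / (216 * real B ^ 2)}) sequentially"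
    using eventually_ge_at_top[of "2 * (2 * k + 9)"]
  proof eventually_elim
    case (elim h)
    show ?case using main_bound[OF assms elim] unfolding C_def B_def rho_def .
  qed
  have upper: "eventually (\<lambda>h. measure_pmf.prob (ray_choice h (1 - q))
                        {f. delta k {u. f u} > rho / (216 * real B ^ 2)} \<le> 1) sequentially"
    by (simp add: measure_pmf.prob_le_1)
  have lim: "(\<lambda>h. 1 - C / real h) \<longlonglongrightarrow> 1 - 0"
    by (intro tendsto_diff tendsto_const lim_const_over_n)
  show ?thesis
    by (intro exI[of _ "rho / (216 * real B ^ 2)"] conjI c0 tendsto_sandwich[OF lower upper] tendsto_const)
       (use lim in simp)
qed


end
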